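(* Assume the cell is $1$-controllable and let $\theta\in\partial D$. Then there exists an admissible path starting at $\theta$ and ending in $\partial\Gamma_{\rm L}$; likewise there exists an admissible path from $\theta$ to $\partial\Gamma_{\rm R}$.
   Context: Cell geometry. Let $\Gamma_{\rm box}\subset\mathbb{R}^2$ be a bounded connected closed domain such that $(x,y)\in\Gamma_{\rm box}$ implies $x\in[0,L]$. Its boundary is $\partial\Gamma_{\rm box}=\partial\Gamma_{\rm L}\cup\partial\Gamma_{\rm R}\cup\bigcup_{k=1}^b\partial\Gamma_k$, where $\partial\Gamma_{\rm L}=\{(0,y):y\in[-a,a]\}$ and $\partial\Gamma_{\rm R}=\{(L,y):y\in[-a,a]\}$ are the two "openings" ($a>0$), and each $\partial\Gamma_k$ is an arc of a circle $C_k$ with center $c_k$, the arcs being oriented so that $\partial\Gamma_{\rm box}$ is everywhere dispersing. In the interior of $\Gamma_{\rm box}$ lies a closed disk $D$ of center $c=(L/2,0)$ and radius $r$ with $\partial D\cap\partial\Gamma_{\rm box}=\emptyset$, and for every $z\in\partial\Gamma_{\rm box}$ the segment $[c,z]$ meets $\partial\Gamma_{\rm box}$ only at $z$. The cell is $\Gamma=\Gamma_{\rm box}\setminus D$; its corners $\partial\Gamma^*$ are the points where two boundary pieces meet. Illumination and 1-controllability. For $k\in\{1,\dots,b\}$, let $I_k\subset\partial D$ be the largest open connected set of points $\theta\in\partial D$ such that a straight line leaving $\theta$ in some direction $\alpha_k(\theta)$ returns to $\theta$ after exactly one (specular) reflection, occurring on $\partial\Gamma_k$; equivalently, $I_k$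 is the part of $\partial D$ illuminated by light emitted from $c_k$ passing only through the arc $\partial\Gamma_k$ (and $\alpha_k(\theta)$ points from $\theta$ towards $c_k$). The cell is $1$-controllable if $\bigcup_{k=1}^b I_k=\partial D$. Admissible path. A curve $\gamma:[0,1]\to\Gamma$, continuous and piecewise differentiable on $(0,1)$, is admissible if: (1) it consists of finitely many straight segments meeting at $\partial\Gamma=\partial\Gamma_{\rm box}\cup\partial D$; (2) at each meeting point on $\partial\Gamma_{\rm box}$ the incoming and outgoing angles are equal (specular reflection); (3) only $\gamma(0)$ and $\gamma(1)$ may lie in $\partial\Gamma_{\rm L}\cup\partial\Gamma_{\rm R}$; (4) $\gamma$ never meets a corner of $\partial\Gamma^*$; (5) $\gamma$ is nowhere tangent to $\partial D$. No reflection law is required at meeting points on $\partial D$. *)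

theory Defs
  imports "HOL-Analysis.Analysis"
begin

text \<open>Points of the plane are complex numbers (x,y) = Complex x y.
 Data of a cell: length L, half-opening a, number b of arcs,
 the box Gbox, arcs wall k (k = 1..b) lying on circles with centres cen k and radii rad k,
 and the radius r of the central disk D = cball (ctr L) r.\<close>

definition opening_L :: "real \<Rightarrow> complex set" where
  "opening_L a = closed_segment (Complex 0 (-a)) (Complex 0 a)"

definition opening_R :: "real \<Rightarrow> real \<Rightarrow> complex set" where
  "opening_R L a = closed_segment (Complex L (-a)) (Complex L a)"

definition ctr :: "real \<Rightarrow> complex" where
  "ctr L = Complex (L/2) 0"

text \<open>Boundary pieces: index 0 is the left opening, index b+1 the right opening,
  indices 1..b are the arcs.\<close>
definition piece :: "real \<Rightarrow> real \<Rightarrow> nat \<Rightarrow> (nat \<Rightarrow> complex set) \<Rightarrow> nat \<Rightarrow> complex set" where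
  "piece L a b wall i = (if i = 0 then opening_L a else if i = Suc b then opening_R L a else wall i)"

definition corners :: "real \<Rightarrow> real \<Rightarrow> nat \<Rightarrow> (nat \<Rightarrow> complex set) \<Rightarrow> complex set" where
  "corners L a b wall = {z. \<exists>i\<in>{0..Suc b}. \<exists>j\<in>{0..Suc b}. i \<noteq> j \<and>
      z \<in> piece L a b wall i \<and> z \<in> piece L a b wall j}"

text \<open>The cell (including the boundary circle of D) and its boundary.\<close>
definition cell :: "complex set \<Rightarrow> real \<Rightarrow> real \<Rightarrow> complex set" where
  "cell Gbox L r = Gbox - ball (ctr L) r"

definition cell_boundary :: "complex set \<Rightarrow> real \<Rightarrow> real \<Rightarrow> complex set" where
  "cell_boundary Gbox L r = frontier Gbox \<union> sphere (ctr L) r"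

definition cell_geometry ::
  "real \<Rightarrow> real \<Rightarrow> nat \<Rightarrow> complex set \<Rightarrow> (nat \<Rightarrow> complex set) \<Rightarrow> (nat \<Rightarrow> complex)
     \<Rightarrow> (nat \<Rightarrow> real) \<Rightarrow> real \<Rightarrow> bool" where
  "cell_geometry L a b Gbox wall cen rad r \<longleftrightarrow>
     0 < L \<and> 0 < a \<and> 0 < r \<and>
     bounded Gbox \<and> closed Gbox \<and> connected Gbox \<and> closure (interior Gbox) = Gbox \<and>
     (\<forall>z\<in>Gbox. 0 \<le> Re z \<and> Re z \<le> L) \<and>
     frontier Gbox = opening_L a \<union> opening_R L a \<union> (\<Union>k\<in>{1..b}. wall k) \<and>
     (\<forall>k\<in>{1..b}. 0 < rad k \<and> wall k \<subseteq> sphere (cen k) (rad k) \<and>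
        compact (wall k) \<and> connected (wall k) \<and> \<not> (\<exists>p. wall k \<subseteq> {p}) \<and>
        Gbox \<inter> ball (cen k) (rad k) = {}) \<and>
     cball (ctr L) r \<subseteq> interior Gbox \<and>
     (\<forall>z\<in>frontier Gbox. closed_segment (ctr L) z \<inter> frontier Gbox = {z})"

text \<open>Points of the circle boundary of D from which the ray towards cen k hits the
  wall k first (at a non-corner point p, which then reflects it straight back).\<close>
definition illuminated ::
  "real \<Rightarrow> real \<Rightarrow> nat \<Rightarrow> complex set \<Rightarrow> (nat \<Rightarrow> complex set) \<Rightarrow> (nat \<Rightarrow> complex)
     \<Rightarrow> real \<Rightarrow> nat \<Rightarrow> complex set" where
  "illuminated L a b Gbox wall cen r k =
     {\<theta> \<in> sphere (ctr L) r. \<exists>p\<in>wall k. p \<notin> corners L a b wall \<and>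
        p \<in> open_segment \<theta> (cen k) \<and>
        open_segment \<theta> p \<inter> (frontier Gbox \<union> cball (ctr L) r) = {}}"

text \<open>I_k: the open (in the circle) connected part of the illuminated set, taken as
  the union of all relatively open connected subsets of it.\<close>
definition I_set ::
  "real \<Rightarrow> real \<Rightarrow> nat \<Rightarrow> complex set \<Rightarrow> (nat \<Rightarrow> complex set) \<Rightarrow> (nat \<Rightarrow> complex)
     \<Rightarrow> real \<Rightarrow> nat \<Rightarrow> complex set" where
  "I_set L a b Gbox wall cen r k =
     \<Union>{U. openin (top_of_set (sphere (ctr L) r)) U \<and> connected U \<and>
          U \<subseteq> illuminated L a b Gbox wall cen r k}"

definition one_controllable ::
  "real \<Rightarrow> real \<Rightarrow> nat \<Rightarrow> complex set \<Rightarrow> (nat \<Rightarrow> complex set) \<Rightarrow> (nat \<Rightarrow> complex)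
     \<Rightarrow> real \<Rightarrow> bool" where
  "one_controllable L a b Gbox wall cen r \<longleftrightarrow>
     (\<Union>k\<in>{1..b}. I_set L a b Gbox wall cen r k) = sphere (ctr L) r"

definition reflect_dir :: "complex \<Rightarrow> complex \<Rightarrow> complex" where
  "reflect_dir n d = d - (2 * (d \<bullet> n) / (n \<bullet> n)) *\<^sub>R n"

text \<open>An admissible path, given by its list of vertices ps = [gamma(0), ..., gamma(1)];
  the curve is the polygonal line through these vertices.\<close>
definition admissible_path ::
  "real \<Rightarrow> real \<Rightarrow> nat \<Rightarrow> complex set \<Rightarrow> (nat \<Rightarrow> complex set) \<Rightarrow> (nat \<Rightarrow> complex)
     \<Rightarrow> real \<Rightarrow> complex list \<Rightarrow> bool" where
  "admissible_path L a b Gbox wall cen r ps \<longleftrightarrow>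
     2 \<le> length ps \<and>
     (\<forall>i < length ps - 1. ps!i \<noteq> ps!(i+1) \<and>
         closed_segment (ps!i) (ps!(i+1)) \<subseteq> cell Gbox L r) \<and>
     (\<forall>i. 0 < i \<and> i < length ps - 1 \<longrightarrow> ps!i \<in> cell_boundary Gbox L r) \<and>
     (\<forall>i. 0 < i \<and> i < length ps - 1 \<longrightarrow> (\<forall>k\<in>{1..b}. ps!i \<in> wall k \<longrightarrow>
         sgn (ps!(i+1) - ps!i) = sgn (reflect_dir (ps!i - cen k) (ps!i - ps!(i-1))))) \<and>
     (\<forall>i < length ps - 1. \<forall>z\<in>closed_segment (ps!i) (ps!(i+1)).
         z \<in> opening_L a \<union> opening_R L a \<longrightarrow>
           (i = 0 \<and> z = ps!0) \<or> (i = length ps - 2 \<and> z = ps!(length ps - 1))) \<and>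
     (\<forall>i < length ps - 1. closed_segment (ps!i) (ps!(i+1)) \<inter> corners L a b wall = {}) \<and>
     (\<forall>i < length ps - 1. \<forall>q\<in>closed_segment (ps!i) (ps!(i+1)) \<inter> sphere (ctr L) r.
         (ps!(i+1) - ps!i) \<bullet> (q - ctr L) \<noteq> 0)"

end

theory Submission
  imports Defs
begin

definition cross :: "complex \<Rightarrow> complex \<Rightarrow> real" where
  "cross u v = Re u * Im v - Im u * Re v"

lemma cross_simps:
  "cross (u - v) w = cross u w - cross v w"
  "cross u (v - w) = cross u v - cross u w"
  "cross (u + v) w = cross u w + cross v w"
  "cross u (v + w) = cross u v + cross u w"
  "cross (x *\<^sub>R u) v = x * cross u v"
  "cross u (x *\<^sub>R v) = x * cross u v"
  "cross u u = 0"
  by (auto simp: cross_def algebra_simps)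

lemma cross_anti: "cross v u = - cross u v"
  by (auto simp: cross_def algebra_simps)

lemma continuous_cross [continuous_intros]:
  "continuous_on S f \<Longrightarrow> continuous_on S g \<Longrightarrow> continuous_on S (\<lambda>x. cross (f x) (g x))"
  unfolding cross_def by (intro continuous_intros)

lemma reflect_parallel:
  fixes n :: complex
  assumes "n \<noteq> 0"
  shows "reflect_dir n (m *\<^sub>R n) = - (m *\<^sub>R n)"
proof -
  have nn: "n \<bullet> n \<noteq> 0" using assms by simp
  have "2 * ((m *\<^sub>R n) \<bullet> n) / (n \<bullet> n) = 2 * m" using nn by simp
  then have "reflect_dir n (m *\<^sub>R n) = m *\<^sub>R n - (2 * m) *\<^sub>R n" by (simp add: reflect_dir_def)
  also have "\<dots> = - (m *\<^sub>R n)" by (simp add: scaleR_left_diff_distrib[symmetric])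
  finally show ?thesis .
qed

lemma reflect_cross: "cross (reflect_dir n d) n = cross d n"
  by (simp add: reflect_dir_def cross_simps)

lemma sgn_eq_of_cross:
  fixes v w :: complex
  assumes "cross v w = 0" "v \<bullet> w > 0"
  shows "sgn w = sgn v"
proof -
  have v0: "v \<noteq> 0" using assms(2) by auto
  define l where "l = (v \<bullet> w) / (norm v)^2"
  have l0: "l > 0" using assms(2) v0 by (simp add: l_def)
  have "w = l *\<^sub>R v"
  proof -
    have e: "Re v * Im w = Im v * Re w" using assms(1) by (simp add: cross_def)
    have n2: "(norm v)^2 = (Re v)^2 + (Im v)^2" by (simp add: cmod_def)
    have nz: "(Re v)^2 + (Im v)^2 \<noteq> 0" using v0 by (simp add: complex_eq_iff)
    show ?thesis unfolding l_def n2 using nz e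
      by (simp add: complex_eq_iff inner_complex_def field_simps power2_eq_square)
  qed
  then show ?thesis using l0 by (simp add: sgn_scaleR)
qed

lemma cont3_pos:
  fixes g :: "complex \<Rightarrow> complex \<Rightarrow> complex \<Rightarrow> real"
  assumes "continuous (at (x0, y0, z0)) (\<lambda>w. g (fst w) (fst (snd w)) (snd (snd w)))"
    and "g x0 y0 z0 > 0"
  shows "\<exists>d>0. \<forall>x y z. dist x x0 < d \<longrightarrow> dist y y0 < d \<longrightarrow> dist z z0 < d \<longrightarrow> g x y z > 0"
proof -
  obtain e where e: "e > 0" "\<And>w. dist w (x0, y0, z0) < e \<Longrightarrow>
      dist (g (fst w) (fst (snd w)) (snd (snd w))) (g x0 y0 z0) < g x0 y0 z0"
    using assms unfolding continuous_at_eps_delta by (metis fst_conv snd_conv)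
  show ?thesis
  proof (intro exI[of _ "e / 3"] conjI allI impI)
    show "e / 3 > 0" using e by simp
    fix x y z assume d: "dist x x0 < e / 3" "dist y y0 < e / 3" "dist z z0 < e / 3"
    have "dist (x, y, z) (x0, y0, z0) \<le> dist x x0 + (dist y y0 + dist z z0)"
    proof -
      have "dist (y, z) (y0, z0) \<le> dist y y0 + dist z z0"
        unfolding dist_Pair_Pair by (rule sqrt_sum_squares_le_sum) auto
      moreover have "dist (x, y, z) (x0, y0, z0) \<le> dist x x0 + dist (y, z) (y0, z0)"
        unfolding dist_Pair_Pair[of x] by (rule sqrt_sum_squares_le_sum) auto
      ultimately show ?thesis by linarith
    qed
    then have "dist (x, y, z) (x0, y0, z0) < e" using d by linarith
    from e(2)[OF this] show "g x y z > 0" by (simp add: dist_real_def)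
  qed
qed

lemma F_ends:
  fixes t1 t2 cn :: complex and R :: real
  assumes R: "R > 0" "norm (t1 - cn) > R" "norm (t2 - cn) > R"
  shows "cross (reflect_dir ((cn + (R / norm (t1 - cn)) *\<^sub>R (t1 - cn)) - cn) ((cn + (R / norm (t1 - cn)) *\<^sub>R (t1 - cn)) - t1))
              (t2 - (cn + (R / norm (t1 - cn)) *\<^sub>R (t1 - cn)))
       * cross (reflect_dir ((cn + (R / norm (t2 - cn)) *\<^sub>R (t2 - cn)) - cn) ((cn + (R / norm (t2 - cn)) *\<^sub>R (t2 - cn)) - t1))
              (t2 - (cn + (R / norm (t2 - cn)) *\<^sub>R (t2 - cn))) \<le> 0"
proof -
  define A where "A = t1 - cn"
  define B where "B = t2 - cn"
  define s1 where "s1 = R / norm A"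
  define s2 where "s2 = R / norm B"
  have s1: "0 < s1" "s1 < 1" using R unfolding s1_def A_def by (auto simp: divide_less_eq intro!: divide_pos_pos)
  have s2: "0 < s2" "s2 < 1" using R unfolding s2_def B_def by (auto simp: divide_less_eq intro!: divide_pos_pos)
  have A0: "A \<noteq> 0" "B \<noteq> 0" using R by (auto simp: A_def B_def)
  have t1e: "t1 = cn + A" and t2e: "t2 = cn + B" by (auto simp: A_def B_def)
  have e1: "(cn + (R / norm (t1 - cn)) *\<^sub>R (t1 - cn)) = cn + s1 *\<^sub>R A" by (simp add: s1_def A_def)
  have e2: "(cn + (R / norm (t2 - cn)) *\<^sub>R (t2 - cn)) = cn + s2 *\<^sub>R B" by (simp add: s2_def B_def)
  have x1: "((s1 - 1) / s1) *\<^sub>R (s1 *\<^sub>R A) = (s1 - 1) *\<^sub>R A" using s1 by simp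
  have "cn + s1 *\<^sub>R A - t1 = (s1 - 1) *\<^sub>R A" by (simp add: t1e algebra_simps)
  then have "cn + s1 *\<^sub>R A - t1 = ((s1 - 1) / s1) *\<^sub>R (s1 *\<^sub>R A)" using x1 by (simp only:)
  then have r1: "reflect_dir (cn + s1 *\<^sub>R A - cn) (cn + s1 *\<^sub>R A - t1) = - (((s1 - 1) / s1) *\<^sub>R (s1 *\<^sub>R A))"
    using reflect_parallel[of "s1 *\<^sub>R A" "(s1 - 1) / s1"] s1 A0 by simp
  have "- (((s1 - 1) / s1) *\<^sub>R (s1 *\<^sub>R A)) = (1 - s1) *\<^sub>R A" unfolding x1 by (simp add: scaleR_diff_left)
  with r1 have r1': "reflect_dir (cn + s1 *\<^sub>R A - cn) (cn + s1 *\<^sub>R A - t1) = (1 - s1) *\<^sub>R A" by simp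
  have F0: "cross (reflect_dir (cn + s1 *\<^sub>R A - cn) (cn + s1 *\<^sub>R A - t1)) (t2 - (cn + s1 *\<^sub>R A))
      = (1 - s1) * cross A B"
    unfolding r1' by (simp add: t2e cross_simps)
  define v where "v = reflect_dir (cn + s2 *\<^sub>R B - cn) (cn + s2 *\<^sub>R B - t1)"
  have "cross v (cn + s2 *\<^sub>R B - cn) = cross (cn + s2 *\<^sub>R B - t1) (cn + s2 *\<^sub>R B - cn)"
    unfolding v_def by (rule reflect_cross)
  then have cv: "s2 * cross v B = s2 * (- cross A B)" by (simp add: t1e cross_simps)
  then have cv': "cross v B = - cross A B" using s2 by (metis mult_cancel_left less_irrefl)
  have "t2 - (cn + s2 *\<^sub>R B) = (1 - s2) *\<^sub>R B" by (simp add: t2e algebra_simps)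
  then have F1: "cross v (t2 - (cn + s2 *\<^sub>R B)) = - (1 - s2) * cross A B"
    by (simp add: cross_simps cv' algebra_simps)
  have "(1 - s1) * cross A B * (- (1 - s2) * cross A B) = - ((1 - s1) * (1 - s2) * (cross A B)^2)"
    by (simp add: power2_eq_square algebra_simps)
  moreover have "(1 - s1) * (1 - s2) * (cross A B)^2 \<ge> 0" using s1 s2 by simp
  ultimately show ?thesis unfolding e1 e2 F0 v_def[symmetric] F1 by linarith
qed

locale cg =
  fixes L a :: real and b :: nat and Gbox :: "complex set"
    and wall :: "nat \<Rightarrow> complex set" and cen :: "nat \<Rightarrow> complex" and rad :: "nat \<Rightarrow> real"
    and r :: real
  assumes geo: "cell_geometry L a b Gbox wall cen rad r"
begin

abbreviation "c \<equiv> ctr L"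
abbreviation "K \<equiv> frontier Gbox"

lemma basic: "0 < L" "0 < a" "0 < r" "bounded Gbox" "closed Gbox"
  "K = opening_L a \<union> opening_R L a \<union> (\<Union>k\<in>{1..b}. wall k)"
  "cball c r \<subseteq> interior Gbox"
  "\<And>z. z \<in> K \<Longrightarrow> closed_segment c z \<inter> K = {z}"
  using geo[unfolded cell_geometry_def] by blast+

lemma wallk: assumes "k \<in> {1..b}"
  shows "0 < rad k" "wall k \<subseteq> sphere (cen k) (rad k)" "compact (wall k)"
    "Gbox \<inter> ball (cen k) (rad k) = {}" "wall k \<subseteq> K"
  using geo assms unfolding cell_geometry_def by auto

lemma K_sub: "K \<subseteq> Gbox" using basic(5) by (simp add: frontier_subset_closed)

lemma compact_K: "compact K" using basic(4) by (simp add: compact_frontier_bounded)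

lemma cball_K: "cball c r \<inter> K = {}"
  using basic(7) by (auto simp: frontier_def)

lemma cball_Gbox: "cball c r \<subseteq> Gbox"
  using basic(7) interior_subset by blast

lemma openings_K: "opening_L a \<subseteq> K" "opening_R L a \<subseteq> K"
  using basic(6) by auto

lemma piece_K: "i \<in> {0..Suc b} \<Longrightarrow> piece L a b wall i \<subseteq> K"
  using basic(6) by (auto simp: piece_def)

lemma corners_K: "corners L a b wall \<subseteq> K"
  unfolding corners_def using piece_K by blast

lemma closed_piece: "i \<in> {0..Suc b} \<Longrightarrow> closed (piece L a b wall i)"
proof -
  assume i: "i \<in> {0..Suc b}"
  show ?thesis
  proof (cases "i = 0 \<or> i = Suc b")
    case True then show ?thesis by (auto simp: piece_def opening_L_def opening_R_def)
  next
    case False then have "i \<in> {1..b}" using i by auto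
    then show ?thesis using False wallk(3) by (auto simp: piece_def compact_imp_closed)
  qed
qed

lemma cen_far: "k \<in> {1..b} \<Longrightarrow> x \<in> Gbox \<Longrightarrow> rad k \<le> dist (cen k) x"
  using wallk(4)[of k] by (auto simp: not_less mem_ball)

lemma seg_in_Gbox:
  assumes x: "x \<in> Gbox" and y: "y \<in> Gbox" and F: "closed_segment x y \<inter> K \<subseteq> {y}"
  shows "closed_segment x y \<subseteq> Gbox"
proof
  fix w assume w: "w \<in> closed_segment x y"
  show "w \<in> Gbox"
  proof (rule ccontr)
    assume nw: "w \<notin> Gbox"
    have "closed_segment x w \<inter> K \<noteq> {}"
      by (rule connected_Int_frontier) (use x nw in auto)
    then obtain f where f: "f \<in> closed_segment x w" "f \<in> K" by auto
    have sub: "closed_segment x w \<subseteq> closed_segment x y"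
      using w by (simp add: subset_closed_segment)
    then have "f = y" using f F by auto
    with f have "closed_segment x y \<subseteq> closed_segment x w" by (simp add: subset_closed_segment)
    with sub have "closed_segment x y = closed_segment x w" by auto
    then have "{x,y} = {x,w}" by simp
    then have "w = y" by (metis doubleton_eq_iff)
    with y nw show False by simp
  qed
qed

lemma seg_out_gen:
  fixes x y p :: complex
  assumes "dist p x = R" "(y - x) \<bullet> (x - p) > 0" "w \<in> closed_segment x y" "dist p w \<le> R"
  shows "w = x"
proof -
  obtain s where s: "0 \<le> s" "s \<le> 1" "w = (1 - s) *\<^sub>R x + s *\<^sub>R y"
    using assms(3) by (auto simp: in_segment)
  have wx: "w - p = (x - p) + s *\<^sub>R (y - x)" using s(3) by (simp add: algebra_simps)
  have "(norm (w - p))^2 = (norm (x - p))^2 + 2 * s * ((y - x) \<bullet> (x - p)) + s^2 * (norm (y - x))^2"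
    unfolding wx power2_norm_eq_inner
    by (simp add: inner_add_left inner_add_right inner_commute power2_eq_square algebra_simps)
  moreover have "norm (x - p) = R" "norm (w - p) \<le> R" using assms(1,4) by (auto simp: dist_norm norm_minus_commute)
  moreover have "R \<ge> 0" using assms(1) by auto
  ultimately have "2 * s * ((y - x) \<bullet> (x - p)) + s^2 * (norm (y - x))^2 \<le> 0"
    by (smt (verit, best) power_mono norm_ge_zero)
  moreover have "s^2 * (norm (y - x))^2 \<ge> 0" by simp
  ultimately have "s * ((y - x) \<bullet> (x - p)) \<le> 0" by linarith
  with s(1) assms(2) have "s = 0" by (smt (verit) mult_pos_pos)
  with s(3) show ?thesis by simp
qed

lemma radial_path:
  assumes z: "z \<in> K" "z \<notin> corners L a b wall"
  defines "tz \<equiv> c + (r / norm (z - c)) *\<^sub>R (z - c)"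
  shows "tz \<in> sphere c r" "admissible_path L a b Gbox wall cen r [tz, z]"
proof -
  have "z \<notin> cball c r" using cball_K z(1) by auto
  then have zc: "norm (z - c) > r" by (simp add: dist_norm norm_minus_commute not_le)
  have r0: "r > 0" using basic by auto
  define u where "u = r / norm (z - c)"
  have u: "0 < u" "u < 1" using zc r0 by (auto simp: u_def divide_simps)
  have tz': "tz = c + u *\<^sub>R (z - c)" by (simp add: tz_def u_def)
  have "norm (tz - c) = r" using zc r0 by (auto simp: tz_def)
  then show ts: "tz \<in> sphere c r" by (simp add: dist_norm norm_minus_commute)
  have "tz \<in> closed_segment c z"
    unfolding in_segment tz' using u by (intro exI[of _ u]) (auto simp: algebra_simps)
  then have sub: "closed_segment tz z \<subseteq> closed_segment c z" by (simp add: subset_closed_segment)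
  have FK: "closed_segment tz z \<inter> K \<subseteq> {z}" using sub basic(8)[OF z(1)] by auto
  have tzG: "tz \<in> Gbox" using ts cball_Gbox by auto
  have segG: "closed_segment tz z \<subseteq> Gbox" using seg_in_Gbox[OF tzG _ FK] K_sub z(1) by auto
  have dotpos: "(z - tz) \<bullet> (tz - c) > 0"
  proof -
    have "z - tz = (1 - u) *\<^sub>R (z - c)" "tz - c = u *\<^sub>R (z - c)" by (auto simp: tz' algebra_simps)
    then have "(z - tz) \<bullet> (tz - c) = (1 - u) * u * (norm (z - c))^2"
      by (simp add: power2_norm_eq_inner)
    moreover have "(norm (z - c))^2 > 0" using zc r0 by (metis less_trans zero_less_power)
    ultimately show ?thesis using u by simp
  qed
  have out: "w \<in> closed_segment tz z \<Longrightarrow> dist c w \<le> r \<Longrightarrow> w = tz" for w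
    by (rule seg_out_gen[OF _ dotpos]) (use ts in auto)
  have segcell: "closed_segment tz z \<subseteq> cell Gbox L r"
    using segG out ts by (force simp: cell_def)
  have tzz: "tz \<noteq> z" using ts zc by (auto simp: dist_norm norm_minus_commute)
  show "admissible_path L a b Gbox wall cen r [tz, z]"
    unfolding admissible_path_def
  proof (intro conjI allI impI ballI)
    fix i assume "i < length [tz, z] - 1"
    then have i: "i = 0" by simp
    show "[tz, z] ! i \<noteq> [tz, z] ! (i + 1)" using i tzz by simp
    show "closed_segment ([tz, z] ! i) ([tz, z] ! (i + 1)) \<subseteq> cell Gbox L r" using i segcell by simp
  next
    fix i zz assume "i < length [tz, z] - 1" and zz: "zz \<in> closed_segment ([tz, z] ! i) ([tz, z] ! (i + 1))"
       "zz \<in> opening_L a \<union> opening_R L a"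
    then have i: "i = 0" by simp
    have "zz \<in> K" using zz(2) openings_K by auto
    then have "zz = z" using FK zz(1) i by auto
    then show "i = 0 \<and> zz = [tz, z] ! 0 \<or> i = length [tz, z] - 2 \<and> zz = [tz, z] ! (length [tz, z] - 1)"
      using i by simp
  next
    fix i assume "i < length [tz, z] - 1"
    then have i: "i = 0" by simp
    show "closed_segment ([tz, z] ! i) ([tz, z] ! (i + 1)) \<inter> corners L a b wall = {}"
      using i FK corners_K z(2) by auto
  next
    fix i q assume "i < length [tz, z] - 1" and q: "q \<in> closed_segment ([tz, z] ! i) ([tz, z] ! (i + 1)) \<inter> sphere c r"
    then have i: "i = 0" by simp
    have "q = tz" using out q i by auto
    then show "([tz, z] ! (i + 1) - [tz, z] ! i) \<bullet> (q - c) \<noteq> 0" using i dotpos by simp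
  qed auto
qed

lemma finite_vline_sphere: "finite {y. Complex x0 y \<in> sphere cc R}"
proof -
  have "{y. Complex x0 y \<in> sphere cc R} \<subseteq>
     {Im cc + sqrt (R^2 - (x0 - Re cc)^2), Im cc - sqrt (R^2 - (x0 - Re cc)^2)}"
  proof
    fix y assume "y \<in> {y. Complex x0 y \<in> sphere cc R}"
    then have "cmod (cc - Complex x0 y) = R" by (simp add: dist_norm)
    then have "sqrt ((Re cc - x0)^2 + (Im cc - y)^2) = R" by (simp add: cmod_def)
    then have "(Re cc - x0)^2 + (Im cc - y)^2 = R^2" and R0: "R \<ge> 0" by auto
    then have "(y - Im cc)^2 = R^2 - (x0 - Re cc)^2" by (simp add: power2_commute)
    then have "\<bar>y - Im cc\<bar> = sqrt (R^2 - (x0 - Re cc)^2)" by (metis real_sqrt_abs)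
    then show "y \<in> {Im cc + sqrt (R^2 - (x0 - Re cc)^2), Im cc - sqrt (R^2 - (x0 - Re cc)^2)}"
      by (auto simp: abs_if split: if_splits)
  qed
  then show ?thesis by (rule finite_subset) simp
qed

lemma Re_opening: "z \<in> opening_L a \<Longrightarrow> Re z = 0" "z \<in> opening_R L a \<Longrightarrow> Re z = L"
  by (auto simp: opening_L_def opening_R_def in_segment scaleR_complex.ctr algebra_simps)

lemma vline_in_segment:
  assumes "0 < a" "-a \<le> y" "y \<le> a"
  shows "Complex x0 y \<in> closed_segment (Complex x0 (-a)) (Complex x0 a)"
  unfolding in_segment
proof (intro exI[of _ "(y + a) / (2 * a)"] conjI)
  show "0 \<le> (y + a) / (2 * a)" "(y + a) / (2 * a) \<le> 1" using assms by (auto simp: divide_simps)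
  show "Complex x0 y = (1 - (y + a) / (2 * a)) *\<^sub>R Complex x0 (- a) + ((y + a) / (2 * a)) *\<^sub>R Complex x0 a"
    using assms by (simp add: complex_eq_iff scaleR_complex.ctr field_simps)
qed

lemma exists_opening_point:
  assumes x0: "x0 = 0 \<or> x0 = L"
  shows "\<exists>z. Re z = x0 \<and> z \<in> K \<and> z \<notin> corners L a b wall \<and>
     z \<in> closed_segment (Complex x0 (-a)) (Complex x0 a)"
proof -
  define S where "S = (\<Union>k\<in>{1..b}. {y. Complex x0 y \<in> sphere (cen k) (rad k)})"
  have "finite S" unfolding S_def using finite_vline_sphere by auto
  moreover have "\<not> finite {-a<..<a}" using basic(2) by simp
  ultimately obtain y where y: "y \<in> {-a<..<a}" "y \<notin> S"
  proof -
    have "infinite ({-a<..<a} - S)" using \<open>finite S\<close> \<open>\<not> finite {-a<..<a}\<close> by (rule Diff_infinite_finite)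
    then obtain y where "y \<in> {-a<..<a} - S" by (metis ex_in_conv finite.emptyI)
    then show ?thesis using that by auto
  qed
  define z where "z = Complex x0 y"
  have zs: "z \<in> closed_segment (Complex x0 (-a)) (Complex x0 a)"
    unfolding z_def using y(1) basic(2) by (intro vline_in_segment) auto
  have zK: "z \<in> K" using zs x0 basic(6) by (auto simp: opening_L_def opening_R_def)
  have nw: "z \<notin> wall k" if "k \<in> {1..b}" for k
    using y(2) wallk(2)[OF that] that by (auto simp: S_def z_def)
  have pc: "i = (if x0 = 0 then 0 else Suc b)" if "i \<in> {0..Suc b}" "z \<in> piece L a b wall i" for i
  proof -
    have "Re z = x0" by (simp add: z_def)
    have "i = 0 \<or> i = Suc b \<or> i \<in> {1..b}" using that(1) by (simp only: atLeastAtMost_iff) arith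
    then consider "i = 0" | "i = Suc b" | "i \<in> {1..b}" by blast
    then show ?thesis
    proof cases
      case 1 then have "Re z = 0" using that(2) Re_opening by (auto simp: piece_def)
      then show ?thesis using 1 \<open>Re z = x0\<close> x0 basic(1) by auto
    next
      case 2 then have "Re z = L" using that(2) Re_opening by (auto simp: piece_def)
      then show ?thesis using 2 \<open>Re z = x0\<close> x0 basic(1) by auto
    next
      case 3 then have "z \<in> wall i" using that(2) by (auto simp: piece_def)
      then show ?thesis using nw 3 by auto
    qed
  qed
  have "z \<notin> corners L a b wall"
  proof
    assume "z \<in> corners L a b wall"
    then obtain i j where "i \<in> {0..Suc b}" "j \<in> {0..Suc b}" "i \<noteq> j"
      "z \<in> piece L a b wall i" "z \<in> piece L a b wall j" unfolding corners_def by blast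
    with pc[of i] pc[of j] show False by simp
  qed
  then show ?thesis using zs zK by (intro exI[of _ z]) (auto simp: z_def)
qed

definition segok :: "complex \<Rightarrow> complex \<Rightarrow> bool" where
  "segok x q \<longleftrightarrow> closed_segment x q \<subseteq> cell Gbox L r \<and> closed_segment x q \<inter> K \<subseteq> {q}
     \<and> closed_segment x q \<inter> sphere c r \<subseteq> {x} \<and> (q - x) \<bullet> (x - c) \<noteq> 0"

definition bounce :: "complex \<Rightarrow> complex \<Rightarrow> complex \<Rightarrow> bool" where
  "bounce x q y \<longleftrightarrow> x \<in> sphere c r \<and> y \<in> sphere c r \<and> q \<in> K \<and> q \<notin> corners L a b wall
     \<and> q \<notin> opening_L a \<union> opening_R L a \<and> x \<noteq> q \<and> y \<noteq> q \<and> segok x q \<and> segok y q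
     \<and> (\<forall>k\<in>{1..b}. q \<in> wall k \<longrightarrow> sgn (y - q) = sgn (reflect_dir (q - cen k) (q - x)))"

lemma sphere_notK: "x \<in> sphere c r \<Longrightarrow> x \<notin> K"
  using cball_K by auto

lemma prepend:
  assumes B: "bounce x q y" and A: "admissible_path L a b Gbox wall cen r (y # rest)"
  shows "admissible_path L a b Gbox wall cen r (x # q # y # rest)"
proof -
  define ps where "ps = y # rest"
  define n where "n = length ps"
  note A' = A[folded ps_def, unfolded admissible_path_def]
  have n2: "2 \<le> n" using A' by (simp add: n_def)
  have A1: "\<And>i. i < n - 1 \<Longrightarrow> ps!i \<noteq> ps!(i+1) \<and> closed_segment (ps!i) (ps!(i+1)) \<subseteq> cell Gbox L r"
    using A' by (simp add: n_def)
  have A2: "\<And>i. 0 < i \<Longrightarrow> i < n - 1 \<Longrightarrow> ps!i \<in> cell_boundary Gbox L r"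
    using A' by (simp add: n_def)
  have A3: "\<And>i k. 0 < i \<Longrightarrow> i < n - 1 \<Longrightarrow> k\<in>{1..b} \<Longrightarrow> ps!i \<in> wall k \<Longrightarrow>
         sgn (ps!(i+1) - ps!i) = sgn (reflect_dir (ps!i - cen k) (ps!i - ps!(i-1)))"
    using A' by (simp add: n_def)
  have A4: "\<And>i z. i < n - 1 \<Longrightarrow> z\<in>closed_segment (ps!i) (ps!(i+1)) \<Longrightarrow>
         z \<in> opening_L a \<union> opening_R L a \<Longrightarrow>
           (i = 0 \<and> z = ps!0) \<or> (i = n - 2 \<and> z = ps!(n - 1))"
    using A' unfolding n_def by blast
  have A5: "\<And>i. i < n - 1 \<Longrightarrow> closed_segment (ps!i) (ps!(i+1)) \<inter> corners L a b wall = {}"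
    using A' by (simp add: n_def)
  have A6: "\<And>i q. i < n - 1 \<Longrightarrow> q\<in>closed_segment (ps!i) (ps!(i+1)) \<inter> sphere c r \<Longrightarrow>
         (ps!(i+1) - ps!i) \<bullet> (q - c) \<noteq> 0"
    using A' unfolding n_def by blast
  have y0: "ps!0 = y" by (simp add: ps_def)
  note Bd = B[unfolded bounce_def segok_def]
  have ys: "y \<in> sphere c r" "x \<in> sphere c r" using Bd by auto
  have yK: "y \<notin> K" "x \<notin> K" using ys sphere_notK by auto
  have yop: "y \<notin> opening_L a \<union> opening_R L a" using yK openings_K by auto
  have ywall: "y \<notin> wall k" if "k \<in> {1..b}" for k using yK wallk(5)[OF that] by auto
  have cases3: "i = 0 \<or> i = 1 \<or> (\<exists>j. i = Suc (Suc j))" for i :: nat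
    by presburger
  have cases3b: "0 < i \<Longrightarrow> i = 1 \<or> i = 2 \<or> (\<exists>j. i = Suc (Suc j) \<and> 0 < j)" for i :: nat
    by presburger
  have seg1: "closed_segment x q \<subseteq> cell Gbox L r" "closed_segment x q \<inter> K \<subseteq> {q}"
     "closed_segment x q \<inter> sphere c r \<subseteq> {x}" "(q - x) \<bullet> (x - c) \<noteq> 0"
    using Bd by auto
  have seg2: "closed_segment q y \<subseteq> cell Gbox L r" "closed_segment q y \<inter> K \<subseteq> {q}"
     "closed_segment q y \<inter> sphere c r \<subseteq> {y}" "(y - q) \<bullet> (y - c) \<noteq> 0"
    using Bd by (auto simp: closed_segment_commute[of q y] inner_diff_left)
  have qK: "q \<in> K" "q \<notin> corners L a b wall" "q \<notin> opening_L a \<union> opening_R L a" "x \<noteq> q" "q \<noteq> y"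
    using Bd by auto
  have refl: "\<And>k. k\<in>{1..b} \<Longrightarrow> q \<in> wall k \<Longrightarrow> sgn (y - q) = sgn (reflect_dir (q - cen k) (q - x))"
    using Bd by auto
  let ?P = "x # q # ps"
  have len: "length ?P = n + 2" by (simp add: n_def)
  have C0: "2 \<le> length ?P" by simp
  have C1: "\<forall>i < length ?P - 1. ?P!i \<noteq> ?P!(i+1) \<and> closed_segment (?P!i) (?P!(i+1)) \<subseteq> cell Gbox L r"
  proof (intro allI impI)
    fix i assume i: "i < length ?P - 1"
    then have i': "i < n + 1" using len by simp
    consider "i = 0" | "i = 1" | j where "i = Suc (Suc j)" using cases3[of i] by blast
    then show "?P!i \<noteq> ?P!(i+1) \<and> closed_segment (?P!i) (?P!(i+1)) \<subseteq> cell Gbox L r"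
    proof cases
      case 1 then show ?thesis using seg1(1) qK(4) by simp
    next
      case 2 then show ?thesis using seg2(1) qK(5) y0 by simp
    next
      case 3 then show ?thesis using A1[of j] i' by simp
    qed
  qed
  have C2: "\<forall>i. 0 < i \<and> i < length ?P - 1 \<longrightarrow> ?P!i \<in> cell_boundary Gbox L r"
  proof (intro allI impI)
    fix i assume i: "0 < i \<and> i < length ?P - 1"
    then have i': "0 < i" "i < n + 1" using len by auto
    consider "i = 1" | "i = 2" | j where "i = Suc (Suc j)" "0 < j" using cases3b[OF i'(1)] by blast
    then show "?P!i \<in> cell_boundary Gbox L r"
    proof cases
      case 1 then show ?thesis using qK by (simp add: cell_boundary_def)
    next
      case 2 then show ?thesis using ys y0 by (simp add: cell_boundary_def numeral_2_eq_2)
    next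
      case 3 then show ?thesis using A2[of j] i' by simp
    qed
  qed
  have C3: "\<forall>i. 0 < i \<and> i < length ?P - 1 \<longrightarrow> (\<forall>k\<in>{1..b}. ?P!i \<in> wall k \<longrightarrow>
         sgn (?P!(i+1) - ?P!i) = sgn (reflect_dir (?P!i - cen k) (?P!i - ?P!(i-1))))"
  proof (intro allI impI ballI)
    fix i k assume i: "0 < i \<and> i < length ?P - 1" and k: "k \<in> {1..b}"
      and w: "?P ! i \<in> wall k"
    then have i': "0 < i" "i < n + 1" using len by auto
    consider "i = 1" | "i = 2" | j where "i = Suc (Suc j)" "0 < j" using cases3b[OF i'(1)] by blast
    then show "sgn (?P!(i+1) - ?P!i) = sgn (reflect_dir (?P!i - cen k) (?P!i - ?P!(i-1)))"
    proof cases
      case 1 then show ?thesis using refl[OF k] w y0 by simp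
    next
      case 2 then show ?thesis using w ywall[OF k] y0 by (simp add: numeral_2_eq_2)
    next
      case 3
      have "sgn (ps!(j+1) - ps!j) = sgn (reflect_dir (ps!j - cen k) (ps!j - ps!(j-1)))"
        using A3[of j k] 3 i' k w by simp
      moreover have "?P ! (i - 1) = ps ! (j - 1)" using 3
        by (metis Suc_pred diff_Suc_1 nth_Cons_Suc)
      ultimately show ?thesis using 3 by simp
    qed
  qed
  have C4: "\<forall>i < length ?P - 1. \<forall>z\<in>closed_segment (?P!i) (?P!(i+1)).
         z \<in> opening_L a \<union> opening_R L a \<longrightarrow>
           (i = 0 \<and> z = ?P!0) \<or> (i = length ?P - 2 \<and> z = ?P!(length ?P - 1))"
  proof (intro allI impI ballI)
    fix i z assume i: "i < length ?P - 1"
      and z: "z \<in> closed_segment (?P ! i) (?P ! (i + 1))"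
      and zo: "z \<in> opening_L a \<union> opening_R L a"
    then have i': "i < n + 1" using len by simp
    have zK: "z \<in> K" using zo openings_K by auto
    consider "i = 0" | "i = 1" | j where "i = Suc (Suc j)" using cases3[of i] by blast
    then show "(i = 0 \<and> z = ?P!0) \<or> (i = length ?P - 2 \<and> z = ?P!(length ?P - 1))"
    proof cases
      case 1 then have "z = q" using z zK seg1(2) by auto
      then show ?thesis using qK zo by simp
    next
      case 2 then have "z = q" using z zK seg2(2) y0 by auto
      then show ?thesis using qK zo by simp
    next
      case 3
      then have "(j = 0 \<and> z = ps!0) \<or> (j = n - 2 \<and> z = ps!(n - 1))"
        using A4[of j z] z zo i' by simp
      then have "j = n - 2 \<and> z = ps!(n - 1)" using y0 yop zo by auto
      moreover have "?P ! (length ?P - 1) = ps ! (n - 1)"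
        using n2 len by simp
      ultimately show ?thesis using 3 n2 len by simp
    qed
  qed
  have C5: "\<forall>i < length ?P - 1. closed_segment (?P!i) (?P!(i+1)) \<inter> corners L a b wall = {}"
  proof (intro allI impI)
    fix i assume i: "i < length ?P - 1"
    then have i': "i < n + 1" using len by simp
    consider "i = 0" | "i = 1" | j where "i = Suc (Suc j)" using cases3[of i] by blast
    then show "closed_segment (?P!i) (?P!(i+1)) \<inter> corners L a b wall = {}"
    proof cases
      case 1 then show ?thesis using seg1(2) qK(2) corners_K by auto
    next
      case 2 then show ?thesis using seg2(2) qK(2) corners_K y0 by auto
    next
      case 3 then show ?thesis using A5[of j] i' by simp
    qed
  qed
  have C6: "\<forall>i < length ?P - 1. \<forall>z\<in>closed_segment (?P!i) (?P!(i+1)) \<inter> sphere c r.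
         (?P!(i+1) - ?P!i) \<bullet> (z - c) \<noteq> 0"
  proof (intro allI impI ballI)
    fix i z assume i: "i < length ?P - 1"
      and z: "z \<in> closed_segment (?P ! i) (?P ! (i + 1)) \<inter> sphere c r"
    then have i': "i < n + 1" using len by simp
    consider "i = 0" | "i = 1" | j where "i = Suc (Suc j)" using cases3[of i] by blast
    then show "(?P!(i+1) - ?P!i) \<bullet> (z - c) \<noteq> 0"
    proof cases
      case 1 then have "z = x" using z seg1(3) by auto
      then show ?thesis using 1 seg1(4) by simp
    next
      case 2 then have "z = y" using z seg2(3) y0 by auto
      then show ?thesis using 2 seg2(4) y0 by simp
    next
      case 3 then show ?thesis using A6[of j z] z i' by simp
    qed
  qed
  show ?thesis
    unfolding admissible_path_def ps_def[symmetric]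
    using C0 C1 C2 C3 C4 C5 C6 by (intro conjI) assumption+
qed

definition LOCP :: bool where
  "LOCP \<longleftrightarrow> (\<forall>t0\<in>sphere c r. \<exists>d>0. \<forall>t1 t2. t1 \<in> sphere c r \<and> t2 \<in> sphere c r \<and>
      dist t1 t0 < d \<and> dist t2 t0 < d \<and> t1 \<noteq> t2 \<longrightarrow> (\<exists>q. bounce t1 q t2))"

lemma reach_all:
  assumes loc: LOCP and t: "t \<in> sphere c r" and t': "t' \<in> sphere c r"
  shows "(\<lambda>x y. \<exists>q. bounce x q y)\<^sup>*\<^sup>* t t'"
proof -
  let ?R = "(\<lambda>x y. \<exists>q. bounce x q y)"
  define A where "A = {y \<in> sphere c r. ?R\<^sup>*\<^sup>* t y}"
  have con: "connected (sphere c r)" by (rule connected_sphere) simp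
  have loc': "\<exists>d>0. \<forall>t1 t2. t1 \<in> sphere c r \<and> t2 \<in> sphere c r \<and>
      dist t1 t0 < d \<and> dist t2 t0 < d \<and> t1 \<noteq> t2 \<longrightarrow> ?R t1 t2" if "t0 \<in> sphere c r" for t0
    using loc that unfolding LOCP_def by blast
  have o1: "openin (top_of_set (sphere c r)) A"
    unfolding openin_euclidean_subtopology_iff
  proof (intro conjI ballI)
    show "A \<subseteq> sphere c r" by (auto simp: A_def)
    fix x assume x: "x \<in> A"
    then obtain d where d: "d > 0" "\<forall>t1 t2. t1 \<in> sphere c r \<and> t2 \<in> sphere c r \<and>
      dist t1 x < d \<and> dist t2 x < d \<and> t1 \<noteq> t2 \<longrightarrow> ?R t1 t2"
      using loc'[of x] by (auto simp: A_def)
    show "\<exists>e>0. \<forall>x'\<in>sphere c r. dist x' x < e \<longrightarrow> x' \<in> A"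
    proof (intro exI[of _ d] conjI ballI impI)
      fix x' assume x': "x' \<in> sphere c r" "dist x' x < d"
      show "x' \<in> A"
      proof (cases "x' = x")
        case True then show ?thesis using x by simp
      next
        case False
        then have "?R x x'" using d(2) x' x d(1) by (auto simp: A_def)
        then show ?thesis using x x' by (auto simp: A_def intro: rtranclp.rtrancl_into_rtrancl)
      qed
    qed (use d in auto)
  qed
  have o2: "openin (top_of_set (sphere c r)) (sphere c r - A)"
    unfolding openin_euclidean_subtopology_iff
  proof (intro conjI ballI)
    show "sphere c r - A \<subseteq> sphere c r" by auto
    fix x assume x: "x \<in> sphere c r - A"
    then obtain d where d: "d > 0" "\<forall>t1 t2. t1 \<in> sphere c r \<and> t2 \<in> sphere c r \<and>
      dist t1 x < d \<and> dist t2 x < d \<and> t1 \<noteq> t2 \<longrightarrow> ?R t1 t2"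
      using loc'[of x] by auto
    show "\<exists>e>0. \<forall>x'\<in>sphere c r. dist x' x < e \<longrightarrow> x' \<in> sphere c r - A"
    proof (intro exI[of _ d] conjI ballI impI)
      fix x' assume x': "x' \<in> sphere c r" "dist x' x < d"
      show "x' \<in> sphere c r - A"
      proof
        show "x' \<in> sphere c r" by fact
        show "x' \<notin> A"
        proof
          assume xA: "x' \<in> A"
          have "x' \<noteq> x" using xA x by auto
          then have "?R x' x" using d(2) x' x d(1) by auto
          then have "x \<in> A" using xA x by (auto simp: A_def intro: rtranclp.rtrancl_into_rtrancl)
          then show False using x by simp
        qed
      qed
    qed (use d in auto)
  qed
  have "t \<in> A" using t by (simp add: A_def)
  then have "sphere c r - A = {}"
    using con o1 o2 unfolding connected_openin by blast
  then show ?thesis using t' by (auto simp: A_def)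
qed

lemma main:
  assumes loc: LOCP and t: "t \<in> sphere c r" and x0: "x0 = 0 \<or> x0 = L"
  shows "\<exists>ps. admissible_path L a b Gbox wall cen r ps \<and> hd ps = t \<and>
     last ps \<in> closed_segment (Complex x0 (-a)) (Complex x0 a)"
proof -
  obtain z where z: "z \<in> K" "z \<notin> corners L a b wall" "z \<in> closed_segment (Complex x0 (-a)) (Complex x0 a)"
    using exists_opening_point[OF x0] by blast
  define tz where "tz = c + (r / norm (z - c)) *\<^sub>R (z - c)"
  have tz: "tz \<in> sphere c r" "admissible_path L a b Gbox wall cen r [tz, z]"
    using radial_path[OF z(1,2)] by (auto simp: tz_def)
  have R: "(\<lambda>x y. \<exists>q. bounce x q y)\<^sup>*\<^sup>* t tz" by (rule reach_all[OF loc t tz(1)])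
  have "\<exists>ps. admissible_path L a b Gbox wall cen r ps \<and> hd ps = t \<and> last ps = z"
    using R
  proof (induction rule: converse_rtranclp_induct)
    case base
    then show ?case using tz(2) by (intro exI[of _ "[tz, z]"]) auto
  next
    case (step x y)
    then obtain q where q: "bounce x q y" by blast
    from step.IH obtain ps where ps: "admissible_path L a b Gbox wall cen r ps" "hd ps = y" "last ps = z"
      by blast
    have "length ps \<ge> 2" using ps(1) by (simp add: admissible_path_def)
    then obtain rest where rest: "ps = y # rest" using ps(2) by (cases ps) auto
    have "admissible_path L a b Gbox wall cen r (x # q # y # rest)"
      using prepend[OF q] ps(1) rest by simp
    moreover have "last (x # q # y # rest) = z" using ps(3) rest by simp
    ultimately show ?case by (intro exI[of _ "x # q # y # rest"]) simp
  qed
  then show ?thesis using z(3) by blast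
qed

definition Pk :: "nat \<Rightarrow> complex \<Rightarrow> complex" where
  "Pk k x = cen k + (rad k / norm (x - cen k)) *\<^sub>R (x - cen k)"

lemma norm_sq_expand:
  fixes x d :: complex
  shows "(norm (x + s *\<^sub>R d))^2 = (norm x)^2 + 2 * s * (d \<bullet> x) + s^2 * (norm d)^2"
  unfolding power2_norm_eq_inner
  by (simp add: inner_add_left inner_add_right inner_commute power2_eq_square algebra_simps)

lemma ill_props:
  assumes k: "k \<in> {1..b}" and t: "t \<in> illuminated L a b Gbox wall cen r k"
  shows "t \<in> sphere c r" "norm (t - cen k) > rad k" "Pk k t \<in> wall k"
    "Pk k t \<notin> corners L a b wall" "open_segment t (Pk k t) \<inter> (K \<union> cball c r) = {}"
    "Pk k t - t = (1 - rad k / norm (t - cen k)) *\<^sub>R (cen k - t)"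
    "(Pk k t - t) \<bullet> (t - c) \<ge> 0"
proof -
  obtain p where p: "t \<in> sphere c r" "p \<in> wall k" "p \<notin> corners L a b wall"
    "p \<in> open_segment t (cen k)" "open_segment t p \<inter> (K \<union> cball c r) = {}"
    using t unfolding illuminated_def by blast
  show "t \<in> sphere c r" by (rule p(1))
  obtain u where u: "t \<noteq> cen k" "0 < u" "u < 1" "p = (1 - u) *\<^sub>R t + u *\<^sub>R cen k"
    using p(4) by (auto simp: in_segment)
  have pc: "p - cen k = (1 - u) *\<^sub>R (t - cen k)" using u(4) by (simp add: algebra_simps)
  have "norm (p - cen k) = rad k" using p(2) wallk(2)[OF k] by (auto simp: dist_norm norm_minus_commute)
  then have radu: "rad k = (1 - u) * norm (t - cen k)" using pc u(3) by simp
  have tc: "norm (t - cen k) > 0" using u(1) by simp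
  have r0: "rad k > 0" using wallk(1)[OF k] .
  show "norm (t - cen k) > rad k" using radu u tc by (simp add: mult_less_cancel_right2)
  have q: "rad k / norm (t - cen k) = 1 - u" using radu tc by (simp add: field_simps)
  have Pp: "Pk k t = p" unfolding Pk_def q using pc by (simp add: algebra_simps)
  show "Pk k t \<in> wall k" "Pk k t \<notin> corners L a b wall" "open_segment t (Pk k t) \<inter> (K \<union> cball c r) = {}"
    using Pp p by auto
  show pt: "Pk k t - t = (1 - rad k / norm (t - cen k)) *\<^sub>R (cen k - t)"
    unfolding q Pp u(4) by (simp add: algebra_simps)
  show "(Pk k t - t) \<bullet> (t - c) \<ge> 0"
  proof (rule ccontr)
    assume "\<not> ?thesis"
    then have g: "(p - t) \<bullet> (t - c) < 0" using Pp by simp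
    define g where "g = (p - t) \<bullet> (t - c)"
    define m where "m = (norm (p - t))^2"
    have pt0: "p \<noteq> t" using g by auto
    have m0: "m > 0" using pt0 by (simp add: m_def)
    define s where "s = min (1/2) (- g / m)"
    have s0: "s > 0" "s < 1" "s \<le> - g / m" using g m0 by (auto simp: s_def g_def divide_neg_pos)
    define w where "w = (1 - s) *\<^sub>R t + s *\<^sub>R p"
    have wseg: "w \<in> open_segment t p" unfolding in_segment w_def using s0 pt0 by auto
    have "w - c = (t - c) + s *\<^sub>R (p - t)" by (simp add: w_def algebra_simps)
    then have "(norm (w - c))^2 = (norm (t - c))^2 + 2 * s * g + s^2 * m"
      using norm_sq_expand[of "t - c" s "p - t"] by (simp only: g_def m_def)
    moreover have "s^2 * m \<le> - (s * g)"
    proof -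
      have "s * m \<le> - g" using s0(3) m0 by (simp add: field_simps)
      then have "s * (s * m) \<le> s * (- g)" using s0(1) by (intro mult_left_mono) auto
      then show ?thesis by (simp add: power2_eq_square mult.assoc)
    qed
    moreover have "(norm (t - c))^2 = r^2" using p(1) by (simp add: dist_norm norm_minus_commute)
    moreover have "s * g < 0" using s0(1) g by (simp add: g_def mult_pos_neg)
    ultimately have "(norm (w - c))^2 < r^2" by linarith
    then have "norm (w - c) < r" using basic(3) by (smt (verit) power_mono norm_ge_zero)
    then have "w \<in> cball c r" by (simp add: dist_norm norm_minus_commute)
    then show False using p(5) wseg by auto
  qed
qed

lemma inner_cnj: "(x::complex) \<bullet> y = Re (cnj x * y)"
  by (simp add: inner_complex_def)

lemma ill_G:
  assumes k: "k \<in> {1..b}" and t: "t \<in> illuminated L a b Gbox wall cen r k"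
  shows "(cen k - t) \<bullet> (t - c) \<ge> 0"
proof -
  have u: "1 - rad k / norm (t - cen k) > 0"
  proof -
    have "rad k < norm (t - cen k)" "0 < rad k" using ill_props(2)[OF k t] wallk(1)[OF k] by auto
    then show ?thesis by (simp add: divide_less_eq)
  qed
  have "(Pk k t - t) \<bullet> (t - c) = (1 - rad k / norm (t - cen k)) * ((cen k - t) \<bullet> (t - c))"
    unfolding ill_props(6)[OF k t] by simp
  then show ?thesis using ill_props(7)[OF k t] u by (simp add: zero_le_mult_iff)
qed

lemma strict_trans:
  assumes k: "k \<in> {1..b}" and e: "e > 0" and ill: "\<forall>x\<in>sphere c r. dist x t0 < e \<longrightarrow> x \<in> illuminated L a b Gbox wall cen r k"
    and t0: "t0 \<in> sphere c r"
  shows "(Pk k t0 - t0) \<bullet> (t0 - c) > 0"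
proof -
  have t0i: "t0 \<in> illuminated L a b Gbox wall cen r k" using ill t0 e by auto
  have r0: "r > 0" using basic(3) .
  have nt: "norm (t0 - c) = r" using t0 by (simp add: dist_norm norm_minus_commute)
  have G0: "(cen k - t0) \<bullet> (t0 - c) > 0"
  proof (rule ccontr)
    assume "\<not> ?thesis"
    then have G: "(cen k - t0) \<bullet> (t0 - c) = 0" using ill_G[OF k t0i] by simp
    define w where "w = cnj (cen k - c) * (t0 - c)"
    have "(cen k - c) \<bullet> (t0 - c) = (cen k - t0) \<bullet> (t0 - c) + (t0 - c) \<bullet> (t0 - c)"
      by (simp add: inner_diff_left inner_diff_right algebra_simps)
    moreover have "(t0 - c) \<bullet> (t0 - c) = r^2" using nt by (simp add: power2_norm_eq_inner[symmetric])
    moreover have "Re w = (cen k - c) \<bullet> (t0 - c)" unfolding w_def by (rule inner_cnj[symmetric])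
    ultimately have Rew: "Re w = r^2" using G by simp
    have cen_out: "cen k \<notin> cball c r"
    proof
      assume "cen k \<in> cball c r"
      then have "cen k \<in> Gbox" using cball_Gbox by auto
      moreover have "cen k \<in> ball (cen k) (rad k)" using wallk(1)[OF k] by simp
      ultimately show False using wallk(4)[OF k] by auto
    qed
    then have cc: "norm (cen k - c) > r" by (simp add: dist_norm norm_minus_commute)
    have nw: "norm w = norm (cen k - c) * r" unfolding w_def norm_mult complex_mod_cnj nt ..
    have "norm w > r^2" unfolding nw power2_eq_square using cc r0 by simp
    have Imw: "Im w \<noteq> 0"
    proof
      assume "Im w = 0"
      then have "norm w = \<bar>Re w\<bar>" by (simp add: cmod_def)
      then show False using \<open>norm w > r^2\<close> Rew by simp
    qed
    have "isCont cis 0" unfolding cis_conv_exp[abs_def] by (intro continuous_intros)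
    then obtain d where d: "d > 0" "\<And>x. dist x 0 < d \<Longrightarrow> dist (cis x) (cis 0) < e / r"
      unfolding continuous_at_eps_delta using e r0 by (metis divide_pos_pos)
    define h0 where "h0 = min (d/2) 1"
    have h0: "0 < h0" "h0 < d" "h0 \<le> 1" using d by (auto simp: h0_def)
    have sh0: "sin h0 > 0" using h0 pi_gt3 by (intro sin_gt_zero) auto
    define h where "h = (if Im w > 0 then h0 else - h0)"
    have hd: "dist h 0 < d" using h0 by (simp add: h_def)
    have pos: "Im w * sin h > 0" using Imw sh0 by (auto simp: h_def mult_neg_neg mult_neg_pos)
    define th where "th = c + (t0 - c) * cis h"
    have thc: "th - c = (t0 - c) * cis h" by (simp add: th_def)
    have ths: "th \<in> sphere c r" using thc nt by (simp add: dist_norm norm_minus_commute norm_mult)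
    have "dist th t0 = norm (t0 - c) * norm (cis h - 1)"
      by (simp add: dist_norm th_def norm_mult[symmetric] algebra_simps)
    also have "\<dots> < r * (e / r)" using d(2)[OF hd] nt r0 by (simp add: dist_norm less_divide_eq mult.commute)
    also have "\<dots> = e" using r0 by simp
    finally have "dist th t0 < e" .
    then have thi: "th \<in> illuminated L a b Gbox wall cen r k" using ill ths by auto
    have "(cen k - th) \<bullet> (th - c) = (cen k - c) \<bullet> (th - c) - (th - c) \<bullet> (th - c)"
      by (simp add: inner_diff_left inner_diff_right algebra_simps)
    also have "(th - c) \<bullet> (th - c) = r^2" using ths by (simp add: power2_norm_eq_inner[symmetric] dist_norm norm_minus_commute)
    also have "(cen k - c) \<bullet> (th - c) = Re (w * cis h)"
      unfolding thc inner_cnj w_def by (simp add: mult.assoc)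
    also have "Re (w * cis h) = Re w * cos h - Im w * sin h" by simp
    finally have "(cen k - th) \<bullet> (th - c) = r^2 * (cos h - 1) - Im w * sin h"
      using Rew by (simp add: algebra_simps)
    moreover have "r^2 * (cos h - 1) \<le> 0" using cos_le_one[of h] by (simp add: mult_nonneg_nonpos)
    ultimately have "(cen k - th) \<bullet> (th - c) < 0" using pos by linarith
    then show False using ill_G[OF k thi] by simp
  qed
  have u: "1 - rad k / norm (t0 - cen k) > 0"
  proof -
    have "rad k < norm (t0 - cen k)" "0 < rad k" using ill_props(2)[OF k t0i] wallk(1)[OF k] by auto
    then show ?thesis by (simp add: divide_less_eq)
  qed
  have "(Pk k t0 - t0) \<bullet> (t0 - c) = (1 - rad k / norm (t0 - cen k)) * ((cen k - t0) \<bullet> (t0 - c))"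
    unfolding ill_props(6)[OF k t0i] by simp
  then show ?thesis using G0 u by simp
qed

lemma convex_lt:
  fixes s A B D :: real
  assumes "0 \<le> s" "s \<le> 1" "A < D" "B < D"
  shows "(1 - s) * A + s * B < D"
proof -
  have "(1 - s) * A \<le> (1 - s) * D" using assms by (intro mult_left_mono) auto
  moreover have "s * B \<le> s * D" using assms by (intro mult_left_mono) auto
  moreover have "(1 - s) * A < (1 - s) * D \<or> s * B < s * D"
    using assms by (cases "s = 1") auto
  ultimately show ?thesis by (auto simp: algebra_simps)
qed

lemma stab:
  assumes x: "x \<in> sphere c r" and q: "q \<in> K"
   and dx: "dist x t0 < d'" and dq: "dist q p0 < d'" and dr: "d' \<le> \<rho>/2" and ddd: "d' \<le> dd"
   and nearK: "\<forall>y\<in>K. dist y p0 < \<rho> \<longrightarrow> dist cn y = R"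
   and qR: "dist cn q = R"
   and sep: "\<forall>w\<in>closed_segment t0 p0. \<rho>/2 \<le> dist w p0 \<longrightarrow> (\<forall>y\<in>K. dd \<le> dist w y)"
   and g1: "(q - x) \<bullet> (x - c) > 0" and g3: "(x - q) \<bullet> (q - cn) > 0"
  shows "segok x q"
proof -
  have xr: "dist c x = r" using x by simp
  have out1: "w = x" if "w \<in> closed_segment x q" "dist c w \<le> r" for w
    by (rule seg_out_gen[OF xr g1 that])
  have KK: "closed_segment x q \<inter> K \<subseteq> {q}"
  proof
    fix w assume w: "w \<in> closed_segment x q \<inter> K"
    show "w \<in> {q}"
    proof (rule ccontr)
      assume wq: "w \<notin> {q}"
      obtain s where s: "0 \<le> s" "s \<le> 1" "w = (1 - s) *\<^sub>R x + s *\<^sub>R q"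
        using w by (auto simp: in_segment)
      show False
      proof (cases "dist w p0 < \<rho>")
        case True
        then have "dist cn w = R" using nearK w by auto
        then have "w = q" using seg_out_gen[OF qR g3, of w] w by (auto simp: closed_segment_commute)
        then show False using wq by simp
      next
        case False
        define w0 where "w0 = (1 - s) *\<^sub>R t0 + s *\<^sub>R p0"
        have w0s: "w0 \<in> closed_segment t0 p0" unfolding w0_def in_segment using s by auto
        have "w - w0 = (1 - s) *\<^sub>R (x - t0) + s *\<^sub>R (q - p0)"
          by (simp add: s(3) w0_def algebra_simps)
        then have "norm (w - w0) \<le> (1 - s) * norm (x - t0) + s * norm (q - p0)"
          using s by (metis (no_types, lifting) abs_of_nonneg diff_ge_0_iff_ge norm_scaleR norm_triangle_le order_refl)
        also have "\<dots> < d'" using convex_lt[OF s(1,2)] dx dq by (simp add: dist_norm)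
        finally have ww0: "dist w w0 < d'" by (simp add: dist_norm)
        have "dist w p0 \<le> dist w w0 + dist w0 p0" by (rule dist_triangle)
        then have "\<rho>/2 \<le> dist w0 p0" using False ww0 dr by linarith
        then have "dd \<le> dist w0 w" using sep w0s w by auto
        then show False using ww0 ddd by (simp add: dist_commute)
      qed
    qed
  qed
  have xG: "x \<in> Gbox" using x cball_Gbox by auto
  have qG: "q \<in> Gbox" using q K_sub by auto
  have G: "closed_segment x q \<subseteq> Gbox" by (rule seg_in_Gbox[OF xG qG KK])
  have cell: "closed_segment x q \<subseteq> cell Gbox L r"
  proof
    fix w assume w: "w \<in> closed_segment x q"
    have "w \<notin> ball c r"
    proof
      assume "w \<in> ball c r"
      then have "dist c w < r" by simp
      then have "w = x" using out1 w by simp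
      then show False using \<open>dist c w < r\<close> xr by simp
    qed
    then show "w \<in> cell Gbox L r" using G w by (auto simp: cell_def)
  qed
  have sph: "closed_segment x q \<inter> sphere c r \<subseteq> {x}" using out1 by auto
  show ?thesis unfolding segok_def using cell KK sph g1 by auto
qed

lemma near_wall:
  assumes k: "k \<in> {1..b}" and p: "p \<in> wall k" "p \<notin> corners L a b wall"
  shows "\<exists>\<rho>>0. \<forall>y\<in>K. dist y p < \<rho> \<longrightarrow> y \<in> wall k"
proof -
  define Oth where "Oth = (\<Union>i\<in>{0..Suc b} - {k}. piece L a b wall i)"
  have "closed Oth" unfolding Oth_def using closed_piece by (intro closed_UN) auto
  have pk: "piece L a b wall k = wall k" using k by (auto simp: piece_def)
  have pO: "p \<notin> Oth"
  proof
    assume "p \<in> Oth"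
    then obtain i where i: "i \<in> {0..Suc b}" "i \<noteq> k" "p \<in> piece L a b wall i" unfolding Oth_def by blast
    have "k \<in> {0..Suc b}" using k by auto
    then have "p \<in> corners L a b wall" unfolding corners_def using i p(1) pk by blast
    then show False using p(2) by simp
  qed
  have KO: "K \<subseteq> Oth \<union> wall k"
  proof
    fix y assume "y \<in> K"
    then consider "y \<in> opening_L a" | "y \<in> opening_R L a" | j where "j \<in> {1..b}" "y \<in> wall j"
      using basic(6) by auto
    then show "y \<in> Oth \<union> wall k"
    proof cases
      case 1 then have "y \<in> piece L a b wall 0" by (simp add: piece_def)
      moreover have "(0::nat) \<in> {0..Suc b} - {k}" using k by auto
      ultimately show ?thesis unfolding Oth_def by blast
    next
      case 2 then have "y \<in> piece L a b wall (Suc b)" by (simp add: piece_def)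
      moreover have "Suc b \<in> {0..Suc b} - {k}" using k by auto
      ultimately show ?thesis unfolding Oth_def by blast
    next
      case 3
      show ?thesis
      proof (cases "j = k")
        case True then show ?thesis using 3 by simp
      next
        case False
        then have "y \<in> piece L a b wall j" using 3 by (auto simp: piece_def)
        moreover have "j \<in> {0..Suc b} - {k}" using 3 False by auto
        ultimately show ?thesis unfolding Oth_def by blast
      qed
    qed
  qed
  have "open (- Oth)" using \<open>closed Oth\<close> by auto
  then obtain \<rho> where \<rho>: "\<rho> > 0" "ball p \<rho> \<subseteq> - Oth" using pO open_contains_ball by blast
  show ?thesis
  proof (intro exI[of _ \<rho>] conjI ballI impI)
    fix y assume "y \<in> K" "dist y p < \<rho>"
    then show "y \<in> wall k" using KO \<rho>(2) by (auto simp: dist_commute)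
  qed (rule \<rho>(1))
qed

lemma local_move:
  assumes oc: "one_controllable L a b Gbox wall cen r" and t0: "t0 \<in> sphere c r"
  shows "\<exists>d>0. \<forall>t1 t2. t1 \<in> sphere c r \<and> t2 \<in> sphere c r \<and>
      dist t1 t0 < d \<and> dist t2 t0 < d \<and> t1 \<noteq> t2 \<longrightarrow> (\<exists>q. bounce t1 q t2)"
proof -
  obtain k where k: "k \<in> {1..b}" "t0 \<in> I_set L a b Gbox wall cen r k"
    using oc t0 unfolding one_controllable_def by blast
  obtain U where U: "openin (top_of_set (sphere c r)) U" "U \<subseteq> illuminated L a b Gbox wall cen r k" "t0 \<in> U"
    using k(2) unfolding I_set_def by blast
  obtain eps where eps: "eps > 0" "\<forall>x\<in>sphere c r. dist x t0 < eps \<longrightarrow> x \<in> U"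
    using U(1,3) unfolding openin_euclidean_subtopology_iff by blast
  have ill: "\<forall>x\<in>sphere c r. dist x t0 < eps \<longrightarrow> x \<in> illuminated L a b Gbox wall cen r k"
    using eps U(2) by blast
  define cn where "cn = cen k"
  define R where "R = rad k"
  have R0: "R > 0" using wallk(1)[OF k(1)] by (simp add: R_def)
  have r0: "r > 0" using basic(3) .
  have t0i: "t0 \<in> illuminated L a b Gbox wall cen r k" using ill t0 eps(1) by auto
  define p0 where "p0 = Pk k t0"
  have p0w: "p0 \<in> wall k" "p0 \<notin> corners L a b wall" using ill_props(3,4)[OF k(1) t0i] by (auto simp: p0_def)
  have p0K: "p0 \<in> K" using p0w wallk(5)[OF k(1)] by auto
  have T0: "(p0 - t0) \<bullet> (t0 - c) > 0" using strict_trans[OF k(1) eps(1) ill t0] by (simp add: p0_def)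
  have tcn: "norm (t0 - cn) > R" using ill_props(2)[OF k(1) t0i] by (simp add: cn_def R_def)
  define sg where "sg = R / norm (t0 - cn)"
  have sg: "0 < sg" "sg < 1" using tcn R0 unfolding sg_def by (auto simp: divide_less_eq intro!: divide_pos_pos)
  have p0cn: "p0 - cn = sg *\<^sub>R (t0 - cn)" by (simp add: p0_def Pk_def cn_def R_def sg_def)
  have p0t0: "p0 - t0 = ((sg - 1) / sg) *\<^sub>R (p0 - cn)"
  proof -
    have "((sg - 1) / sg) *\<^sub>R (p0 - cn) = (sg - 1) *\<^sub>R (t0 - cn)" unfolding p0cn using sg by simp
    also have "\<dots> = p0 - t0" using p0cn by (simp add: algebra_simps)
    finally show ?thesis by simp
  qed
  have tcn0: "t0 - cn \<noteq> 0" using tcn R0 by auto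
  have N0: "(t0 - p0) \<bullet> (p0 - cn) > 0"
  proof -
    have "t0 - p0 = (1 - sg) *\<^sub>R (t0 - cn)" using p0cn by (simp add: algebra_simps)
    then have "(t0 - p0) \<bullet> (p0 - cn) = (1 - sg) * sg * (norm (t0 - cn))^2"
      unfolding p0cn by (simp add: power2_norm_eq_inner)
    then show ?thesis using sg tcn0 by simp
  qed
  have pcn0: "p0 - cn \<noteq> 0" using p0cn sg tcn0 by simp
  have V0: "(reflect_dir (p0 - cn) (p0 - t0)) \<bullet> (t0 - p0) > 0"
  proof -
    have "reflect_dir (p0 - cn) (p0 - t0) = - (p0 - t0)"
      by (metis p0t0 reflect_parallel[OF pcn0])
    then have "reflect_dir (p0 - cn) (p0 - t0) = t0 - p0" by simp
    moreover have "t0 \<noteq> p0" using N0 by auto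
    ultimately show ?thesis by simp
  qed
  obtain \<rho> where \<rho>: "\<rho> > 0" "\<forall>y\<in>K. dist y p0 < \<rho> \<longrightarrow> y \<in> wall k"
    using near_wall[OF k(1) p0w] by blast
  have nearK: "\<forall>y\<in>K. dist y p0 < \<rho> \<longrightarrow> dist cn y = R"
    using \<rho>(2) wallk(2)[OF k(1)] by (auto simp: cn_def R_def)
  define C where "C = closed_segment t0 p0 \<inter> {w. \<rho>/2 \<le> dist w p0}"
  have "closed {w. \<rho>/2 \<le> dist w p0}"
    by (rule closed_Collect_le) (intro continuous_intros)+
  then have Cc: "compact C" unfolding C_def by (intro compact_Int_closed) auto
  have CK: "C \<inter> K = {}"
  proof (rule ccontr)
    assume "C \<inter> K \<noteq> {}"
    then obtain w where w: "w \<in> closed_segment t0 p0" "\<rho>/2 \<le> dist w p0" "w \<in> K" by (auto simp: C_def)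
    have "w \<noteq> p0" using w(2) \<rho>(1) by auto
    moreover have "w \<noteq> t0" using w(3) sphere_notK[OF t0] by auto
    ultimately have "w \<in> open_segment t0 p0" using w(1) by (simp add: open_segment_def)
    then show False using ill_props(5)[OF k(1) t0i] w(3) by (auto simp: p0_def)
  qed
  obtain dd where dd: "dd > 0" "\<forall>x\<in>C. \<forall>y\<in>K. dd \<le> dist x y"
    using separate_compact_closed[OF Cc _ CK] compact_K compact_imp_closed by blast
  have sep: "\<forall>w\<in>closed_segment t0 p0. \<rho>/2 \<le> dist w p0 \<longrightarrow> (\<forall>y\<in>K. dd \<le> dist w y)"
    using dd(2) by (auto simp: C_def)
  define g where "g = (\<lambda>x y q. min (min ((q - x) \<bullet> (x - c)) ((q - y) \<bullet> (y - c)))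
      (min (min ((x - q) \<bullet> (q - cn)) ((y - q) \<bullet> (q - cn))) ((reflect_dir (q - cn) (q - x)) \<bullet> (y - q))))"
  have g0: "g t0 t0 p0 > 0"
    using T0 N0 V0 unfolding g_def by (simp add: inner_commute)
  have gc: "continuous (at (t0, t0, p0)) (\<lambda>w. g (fst w) (fst (snd w)) (snd (snd w)))"
    unfolding g_def reflect_dir_def using pcn0 by (intro continuous_intros) auto
  obtain d1 where d1: "d1 > 0" "\<forall>x y z. dist x t0 < d1 \<longrightarrow> dist y t0 < d1 \<longrightarrow> dist z p0 < d1 \<longrightarrow> g x y z > 0"
    using cont3_pos[OF gc g0] by blast
  define d' where "d' = min (min (\<rho>/2) dd) d1"
  have d': "d' > 0" "d' \<le> \<rho>/2" "d' \<le> dd" "d' \<le> d1" using \<rho>(1) dd(1) d1(1) by (auto simp: d'_def)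
  have Pc: "isCont (Pk k) t0"
    unfolding Pk_def[abs_def] using tcn0 by (intro continuous_intros) (auto simp: cn_def)
  obtain d2 where d2: "d2 > 0" "\<And>x. dist x t0 < d2 \<Longrightarrow> dist (Pk k x) p0 < d'"
    using Pc d'(1) unfolding continuous_at_eps_delta p0_def by blast
  define d where "d = min (min (eps/2) (d2/2)) (min d' (r/2))"
  have d: "d > 0" "2 * d \<le> eps" "2 * d \<le> d2" "d \<le> d'" "d \<le> r / 2"
    using eps(1) d2(1) d'(1) r0 by (auto simp: d_def)
  show ?thesis
  proof (intro exI[of _ d] conjI allI impI)
    show "d > 0" by (rule d(1))
    fix t1 t2 assume tt: "t1 \<in> sphere c r \<and> t2 \<in> sphere c r \<and> dist t1 t0 < d \<and> dist t2 t0 < d \<and> t1 \<noteq> t2"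
    then have t1: "t1 \<in> sphere c r" "dist t1 t0 < d" and t2: "t2 \<in> sphere c r" "dist t2 t0 < d"
      by auto
    have t1i: "t1 \<in> illuminated L a b Gbox wall cen r k" using ill t1 d by auto
    have t2i: "t2 \<in> illuminated L a b Gbox wall cen r k" using ill t2 d by auto
    have nt1: "norm (t1 - c) = r" "norm (t2 - c) = r" "norm (t0 - c) = r"
      using t1 t2 t0 by (auto simp: dist_norm norm_minus_commute)
    define W where "W = (\<lambda>s::real. (1 - s) *\<^sub>R (t1 - c) + s *\<^sub>R (t2 - c))"
    define Th where "Th = (\<lambda>s. c + (r / norm (W s)) *\<^sub>R W s)"
    have Wnear: "norm (W s - (t0 - c)) < d" if "s \<in> {0..1}" for s
    proof -
      have "W s - (t0 - c) = (1 - s) *\<^sub>R (t1 - t0) + s *\<^sub>R (t2 - t0)" by (simp add: W_def algebra_simps)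
      then have "norm (W s - (t0 - c)) \<le> (1 - s) * norm (t1 - t0) + s * norm (t2 - t0)"
        using that by (metis (no_types, lifting) abs_of_nonneg atLeastAtMost_iff diff_ge_0_iff_ge norm_scaleR norm_triangle_le order_refl)
      also have "\<dots> < d" using convex_lt[of s] that t1 t2 by (simp add: dist_norm)
      finally show ?thesis .
    qed
    have Wpos: "norm (W s) > r / 2" if "s \<in> {0..1}" for s
    proof -
      have "norm (t0 - c) \<le> norm (W s) + norm (W s - (t0 - c))" by (metis norm_triangle_sub add.commute norm_minus_commute)
      then show ?thesis using Wnear[OF that] nt1(3) d(5) by linarith
    qed
    have Thnear: "dist (Th s) t0 < 2 * d" if "s \<in> {0..1}" for s
    proof -
      have nW: "norm (W s) > 0" using Wpos[OF that] r0 by linarith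
      have "Th s - t0 = ((r / norm (W s)) *\<^sub>R W s - W s) + (W s - (t0 - c))" by (simp add: Th_def)
      then have "norm (Th s - t0) \<le> norm ((r / norm (W s)) *\<^sub>R W s - W s) + norm (W s - (t0 - c))"
        by (metis norm_triangle_ineq)
      moreover have "norm ((r / norm (W s)) *\<^sub>R W s - W s) = \<bar>r - norm (W s)\<bar>"
      proof -
        have "(r / norm (W s)) *\<^sub>R W s - W s = ((r - norm (W s)) / norm (W s)) *\<^sub>R W s"
          using nW by (simp add: diff_divide_distrib scaleR_diff_left)
        then show ?thesis using nW by simp
      qed
      moreover have "\<bar>r - norm (W s)\<bar> \<le> norm (W s - (t0 - c))"
        using norm_triangle_ineq3[of "W s" "t0 - c"] nt1(3) by (simp add: abs_minus_commute)
      ultimately have "norm (Th s - t0) < 2 * d" using Wnear[OF that] by linarith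
      then show ?thesis by (simp add: dist_norm)
    qed
    have Ths: "Th s \<in> sphere c r" if "s \<in> {0..1}" for s
    proof -
      have "norm (W s) > 0" using Wpos[OF that] r0 by linarith
      then have "norm (Th s - c) = r" using r0 by (simp add: Th_def)
      then show ?thesis by (simp add: dist_norm norm_minus_commute)
    qed
    have Thi: "Th s \<in> illuminated L a b Gbox wall cen r k" if "s \<in> {0..1}" for s
      using ill Ths[OF that] Thnear[OF that] d(2) by auto
    have Th0: "Th 0 = t1" using nt1 r0 by (simp add: Th_def W_def)
    have Th1: "Th 1 = t2" using nt1 r0 by (simp add: Th_def W_def)
    have Thcn: "norm (Th s - cn) > R" if "s \<in> {0..1}" for s
      using ill_props(2)[OF k(1) Thi[OF that]] by (simp add: cn_def R_def)
    define G where "G = (\<lambda>q. cross (reflect_dir (q - cn) (q - t1)) (t2 - q))"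
    define F where "F = (\<lambda>s. G (Pk k (Th s)))"
    have Wnz: "norm ((1 - x) *\<^sub>R (t1 - c) + x *\<^sub>R (t2 - c)) \<noteq> 0" if "x \<in> {0..1}" for x
    proof -
      have "norm (W x) > r / 2" by (rule Wpos[OF that])
      then show ?thesis using r0 unfolding W_def by linarith
    qed
    have cTh: "continuous_on {0..1} Th"
      unfolding Th_def W_def[abs_def]
      by (intro continuous_intros) (use Wnz in auto)
    have cP: "continuous_on {x. x \<noteq> cn} (Pk k)"
      unfolding Pk_def[abs_def] by (intro continuous_intros) (auto simp: cn_def)
    have cG: "continuous_on {x. x \<noteq> cn} G"
      unfolding G_def reflect_dir_def by (intro continuous_intros) auto
    have Pcn: "Pk k x \<noteq> cn" if "x \<noteq> cn" for x
      using that R0 by (simp add: Pk_def cn_def R_def)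
    have cF: "continuous_on {0..1} F"
    proof -
      have i1: "Th ` {0..1} \<subseteq> {x. x \<noteq> cn}" using Thcn R0 by force
      have "continuous_on {0..1} (\<lambda>s. Pk k (Th s))"
        by (rule continuous_on_compose2[OF cP cTh i1])
      moreover have "(\<lambda>s. Pk k (Th s)) ` {0..1} \<subseteq> {x. x \<noteq> cn}" using i1 Pcn by auto
      ultimately show ?thesis unfolding F_def by (rule continuous_on_compose2[OF cG])
    qed
    have F01: "F 0 * F 1 \<le> 0"
    proof -
      have a1: "norm (t1 - cn) > R" "norm (t2 - cn) > R"
        using ill_props(2)[OF k(1) t1i] ill_props(2)[OF k(1) t2i] by (auto simp: cn_def R_def)
      show ?thesis using F_ends[OF R0 a1] unfolding F_def G_def Th0 Th1 Pk_def cn_def R_def .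
    qed
    obtain s where s: "s \<in> {0..1}" "F s = 0"
    proof (cases "F 0 \<le> 0 \<and> 0 \<le> F 1")
      case True
      then obtain x where "0 \<le> x" "x \<le> 1" "F x = 0" using IVT'[of F 0 0 1] cF by auto
      then show ?thesis using that by auto
    next
      case False
      then have "F 1 \<le> 0 \<and> 0 \<le> F 0" using F01 by (smt (verit) mult_pos_pos mult_neg_neg)
      then obtain x where "0 \<le> x" "x \<le> 1" "F x = 0" using IVT2'[of F 1 0 0] cF by auto
      then show ?thesis using that by auto
    qed
    define q where "q = Pk k (Th s)"
    have thsi: "Th s \<in> illuminated L a b Gbox wall cen r k" by (rule Thi[OF s(1)])
    have qw: "q \<in> wall k" "q \<notin> corners L a b wall" using ill_props(3,4)[OF k(1) thsi] by (auto simp: q_def)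
    have qK: "q \<in> K" using qw wallk(5)[OF k(1)] by auto
    have qR: "dist cn q = R" using qw(1) wallk(2)[OF k(1)] by (auto simp: cn_def R_def)
    have "dist (Th s) t0 < d2" using Thnear[OF s(1)] d(3) by linarith
    then have dq: "dist q p0 < d'" unfolding q_def by (rule d2(2))
    have "dist t1 t0 < d1" "dist t2 t0 < d1" "dist q p0 < d1" using t1 t2 d(4) d'(4) dq by linarith+
    then have gq: "g t1 t2 q > 0" using d1(2) by blast
    then have gs: "(q - t1) \<bullet> (t1 - c) > 0" "(q - t2) \<bullet> (t2 - c) > 0"
       "(t1 - q) \<bullet> (q - cn) > 0" "(t2 - q) \<bullet> (q - cn) > 0" "(reflect_dir (q - cn) (q - t1)) \<bullet> (t2 - q) > 0"
      unfolding g_def by auto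
    have dt1: "dist t1 t0 < d'" "dist t2 t0 < d'" using t1 t2 d(4) by auto
    have ok1: "segok t1 q"
      by (rule stab[OF t1(1) qK dt1(1) dq d'(2) d'(3) nearK qR sep gs(1) gs(3)])
    have ok2: "segok t2 q"
      by (rule stab[OF t2(1) qK dt1(2) dq d'(2) d'(3) nearK qR sep gs(2) gs(4)])
    have pk: "piece L a b wall k = wall k" using k(1) by (auto simp: piece_def)
    have kk: "k \<in> {0..Suc b}" using k(1) by auto
    have qop: "q \<notin> opening_L a \<union> opening_R L a"
    proof
      assume "q \<in> opening_L a \<union> opening_R L a"
      then consider "q \<in> piece L a b wall 0" | "q \<in> piece L a b wall (Suc b)" by (auto simp: piece_def)
      then have "q \<in> corners L a b wall"
      proof cases
        case 1 then show ?thesis unfolding corners_def using kk k(1) qw(1) pk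
          by (intro CollectI bexI[of _ 0] bexI[of _ k]) auto
      next
        case 2 then show ?thesis unfolding corners_def using kk k(1) qw(1) pk
          by (intro CollectI bexI[of _ "Suc b"] bexI[of _ k]) auto
      qed
      then show False using qw(2) by simp
    qed
    have refl: "sgn (t2 - q) = sgn (reflect_dir (q - cen j) (q - t1))" if j: "j \<in> {1..b}" "q \<in> wall j" for j
    proof -
      have "j = k"
      proof (rule ccontr)
        assume "j \<noteq> k"
        moreover have "piece L a b wall j = wall j" using j(1) by (auto simp: piece_def)
        moreover have "j \<in> {0..Suc b}" using j(1) by auto
        ultimately have "q \<in> corners L a b wall" unfolding corners_def using kk qw(1) pk j(2)
          by (intro CollectI bexI[of _ j] bexI[of _ k]) auto
        then show False using qw(2) by simp
      qed
      moreover have "cross (reflect_dir (q - cn) (q - t1)) (t2 - q) = 0"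
        using s(2) by (simp add: F_def G_def q_def)
      ultimately show ?thesis using sgn_eq_of_cross gs(5) by (simp add: cn_def)
    qed
    have ne: "t1 \<noteq> q" "t2 \<noteq> q" using sphere_notK[OF t1(1)] sphere_notK[OF t2(1)] qK by auto
    have "bounce t1 q t2"
      unfolding bounce_def using t1(1) t2(1) qK qw(2) qop ne ok1 ok2 refl by simp
    then show "\<exists>q. bounce t1 q t2" by blast
  qed
qed

lemma LOCP_of: assumes "one_controllable L a b Gbox wall cen r" shows LOCP
  unfolding LOCP_def using local_move[OF assms] by blast

end

theorem lemma2:
  fixes L a r :: real and b :: nat and Gbox :: "complex set"
    and wall :: "nat \<Rightarrow> complex set" and cen :: "nat \<Rightarrow> complex" and rad :: "nat \<Rightarrow> real"
    and \<theta> :: complex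
  assumes "cell_geometry L a b Gbox wall cen rad r"
    and "one_controllable L a b Gbox wall cen r"
    and "\<theta> \<in> sphere (ctr L) r"
  shows "(\<exists>ps. admissible_path L a b Gbox wall cen r ps \<and> hd ps = \<theta> \<and> last ps \<in> opening_L a)
       \<and> (\<exists>ps. admissible_path L a b Gbox wall cen r ps \<and> hd ps = \<theta> \<and> last ps \<in> opening_R L a)"
proof -
  interpret cg L a b Gbox wall cen rad r by unfold_locales (rule assms(1))
  have loc: LOCP by (rule LOCP_of[OF assms(2)])
  show ?thesis
    using main[OF loc assms(3), of 0] main[OF loc assms(3), of L]
    by (simp add: opening_L_def opening_R_def)
qed

end
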